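(* Let $\nu$ be a sub-Gaussian probability measure on $\mathbb{R}$ and $c_1,C>0$ constants such that a vector $X\in\mathbb{R}^d$ with i.i.d. entries from $\nu$ satisfies $\mathbb{P}(\|X\|\ge\sqrt d+t)\le Ce^{-c_1t^2}$ for $t\ge0$. Let $X_1,X_2,\dots$ be i.i.d. such vectors with law $\mu$, and $\mu_n=\frac1n\sum_{i=1}^n\delta_{X_i}$. Let $\delta>0$. Then almost surely \[ \sup_{\sigma\in[\delta,\sqrt n],\ i=1,\dots,n}\Big|\frac{\int g_\sigma(X_i,x')\,d\mu_n(x')}{\int f_\sigma(X_i,x')\,d\mu_n(x')}-\frac{\int g_\sigma(X_i,x')\,d\mu(x')}{\int f_\sigma(X_i,x')\,d\mu(x')}\Big|=O\big(n^{8/(c_1\delta^2)-1/2}\sqrt{\log n}\big). \]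
   Context: $f_\sigma(x,x')=\exp(-\|x-x'\|^2/2\sigma^2)$ and $g_\sigma(x,x')=\frac{\|x-x'\|^2}{2\sigma^2}\exp(-\|x-x'\|^2/2\sigma^2)$. *)

theory Defs
  imports "HOL-Probability.Probability"
begin

text \<open>Vectors in R^d are represented as functions nat => real, restricted to {..<d}.\<close>

definition sqdist :: "nat \<Rightarrow> (nat \<Rightarrow> real) \<Rightarrow> (nat \<Rightarrow> real) \<Rightarrow> real" where
  "sqdist d x y = (\<Sum>k<d. (x k - y k)^2)"

definition vnorm :: "nat \<Rightarrow> (nat \<Rightarrow> real) \<Rightarrow> real" where
  "vnorm d x = sqrt (\<Sum>k<d. (x k)^2)"

definition kf :: "nat \<Rightarrow> real \<Rightarrow> (nat \<Rightarrow> real) \<Rightarrow> (nat \<Rightarrow> real) \<Rightarrow> real" where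
  "kf d \<sigma> x y = exp (- sqdist d x y / (2 * \<sigma>^2))"

definition kg :: "nat \<Rightarrow> real \<Rightarrow> (nat \<Rightarrow> real) \<Rightarrow> (nat \<Rightarrow> real) \<Rightarrow> real" where
  "kg d \<sigma> x y = sqdist d x y / (2 * \<sigma>^2) * exp (- sqdist d x y / (2 * \<sigma>^2))"

definition vec_law :: "nat \<Rightarrow> real measure \<Rightarrow> (nat \<Rightarrow> real) measure" where
  "vec_law d \<nu> = PiM {..<d} (\<lambda>_. \<nu>)"

definition subgaussian :: "real measure \<Rightarrow> bool" where
  "subgaussian \<nu> \<longleftrightarrow> (\<exists>K>0. \<forall>t\<ge>0. measure \<nu> {x. \<bar>x\<bar> \<ge> t} \<le> 2 * exp (- (t^2) / K^2))"

end

theory Submission imports Defs begin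


lemma u_le_exp: "(u::real) \<le> exp u"
  using exp_ge_add_one_self[of u] by linarith

lemma sq_le_exp: assumes "0 \<le> (u::real)" shows "u^2 \<le> 4 * exp u"
proof -
  have "u/2 \<le> exp (u/2)" by (rule u_le_exp)
  hence "(u/2)^2 \<le> (exp (u/2))^2" using assms by (intro power_mono) auto
  also have "(exp (u/2))^2 = exp u" by (simp add: power2_eq_square flip: exp_add)
  finally show ?thesis by (simp add: power2_eq_square)
qed

lemma num1: fixes v :: real shows "\<bar>v\<bar> * exp (-(v^2/2)) \<le> 3/2"
proof -
  define u where "u = v^2/2"
  have u0: "u \<ge> 0" by (simp add: u_def)
  have "\<bar>v\<bar> \<le> 1/2 + u" unfolding u_def
    using sum_squares_bound[of "\<bar>v\<bar>" 1] by (simp add: power2_eq_square)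
  also have "\<dots> \<le> 3/2 * exp u" using u_le_exp[of u] one_le_exp_iff[of u] u0 by linarith
  finally have "\<bar>v\<bar> * exp (-u) \<le> 3/2 * exp u * exp (-u)" by (simp)
  also have "\<dots> = 3/2" by (simp flip: exp_add)
  finally show ?thesis by (simp add: u_def)
qed

lemma num2: fixes v :: real shows "\<bar>v * (1 - v^2/2)\<bar> * exp (-(v^2/2)) \<le> 6"
proof -
  define u where "u = v^2/2"
  have u0: "u \<ge> 0" by (simp add: u_def)
  have a: "\<bar>v\<bar> \<le> 1/2 + u" unfolding u_def
    using sum_squares_bound[of "\<bar>v\<bar>" 1] by (simp add: power2_eq_square)
  have "\<bar>1 - u\<bar> \<le> 1 + u" using u0 by auto
  hence "\<bar>v * (1 - u)\<bar> \<le> \<bar>v\<bar> * (1 + u)" by (simp add: abs_mult mult_left_mono)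
  also have "\<dots> = \<bar>v\<bar> + \<bar>v\<bar> * u" by (simp add: algebra_simps)
  also have "\<dots> \<le> (1/2 + u) + (1/2 + u) * u" using a u0 by (intro add_mono mult_right_mono) auto
  also have "\<dots> = 1/2 + 3/2*u + u^2" by (simp add: algebra_simps power2_eq_square)
  also have "\<dots> \<le> 6 * exp u" using u_le_exp[of u] one_le_exp_iff[of u] u0 sq_le_exp[OF u0] by linarith
  finally have "\<bar>v * (1 - u)\<bar> * exp (-u) \<le> 6 * exp u * exp (-u)" by (simp)
  also have "\<dots> = 6" by (simp flip: exp_add)
  finally show ?thesis by (simp add: u_def)
qed

lemma num3: fixes v :: real shows "v^2 * exp (-(v^2/2)) \<le> 2"
proof -
  define u where "u = v^2/2"
  have "u * exp (-u) \<le> exp u * exp (-u)" using u_le_exp[of u] by simp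
  also have "\<dots> = 1" by (simp flip: exp_add)
  finally have "2 * (u * exp (-u)) \<le> 2" by simp
  thus ?thesis by (simp add: u_def)
qed

lemma num4: fixes v :: real shows "\<bar>v^2 * (1 - v^2/2)\<bar> * exp (-(v^2/2)) \<le> 10"
proof -
  define u where "u = v^2/2"
  have u0: "u \<ge> 0" by (simp add: u_def)
  have "\<bar>2*u * (1 - u)\<bar> \<le> 2*u + 2*u^2" using u0 by (simp add: abs_mult power2_eq_square algebra_simps abs_if)
  also have "\<dots> \<le> 10 * exp u" using u_le_exp[of u] sq_le_exp[OF u0] by linarith
  finally have "\<bar>2*u * (1 - u)\<bar> * exp (-u) \<le> 10 * exp u * exp (-u)" by (simp)
  also have "\<dots> = 10" by (simp flip: exp_add)
  finally show ?thesis by (simp add: u_def)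
qed

lemma lip_deriv:
  fixes f f' :: "real \<Rightarrow> real"
  assumes "\<And>z. min a b \<le> z \<Longrightarrow> z \<le> max a b \<Longrightarrow> (f has_real_derivative f' z) (at z)"
    and "\<And>z. min a b \<le> z \<Longrightarrow> z \<le> max a b \<Longrightarrow> \<bar>f' z\<bar> \<le> B"
  shows "\<bar>f a - f b\<bar> \<le> B * \<bar>a - b\<bar>"
proof -
  have *: "\<bar>f y - f x\<bar> \<le> B * (y - x)" if "x < y" "min a b = x" "max a b = y" for x y
  proof -
    have d: "(f has_real_derivative f' t) (at t)" if "x \<le> t" "t \<le> y" for t
      using assms(1)[of t] that \<open>min a b = x\<close> \<open>max a b = y\<close> by simp
    obtain z where z: "x < z" "z < y" "f y - f x = (y - x) * f' z"
      using MVT2[OF \<open>x < y\<close> d] by blast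
    have "\<bar>f y - f x\<bar> = (y - x) * \<bar>f' z\<bar>" using z \<open>x<y\<close> by (simp add: abs_mult)
    also have "\<dots> \<le> (y - x) * B" using assms(2)[of z] z that by (intro mult_left_mono) auto
    finally show ?thesis by (simp add: mult.commute)
  qed
  show ?thesis
  proof (cases "a < b")
    case True then show ?thesis using *[of a b] by (simp add: abs_minus_commute)
  next
    case False
    show ?thesis
    proof (cases "a = b")
      case True then show ?thesis by simp
    next
      case False
      with \<open>\<not> a < b\<close> have "b < a" by simp
      then show ?thesis using *[of b a] by simp
    qed
  qed
qed

lemma absdiv: assumes "0 < (b::real)" "\<bar>w\<bar> \<le> c" shows "\<bar>w / b\<bar> \<le> c / b"
proof -
  have "\<bar>w / b\<bar> = \<bar>w\<bar> / b" using assms(1) by simp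
  also have "\<dots> \<le> c / b" using assms by (intro divide_right_mono) auto
  finally show ?thesis .
qed

definition PP :: "real \<Rightarrow> real \<Rightarrow> real" where "PP b1 r = exp (-((r/b1)^2/2))"
definition QQ :: "real \<Rightarrow> real \<Rightarrow> real" where "QQ b1 r = (r/b1)^2/2 * exp (-((r/b1)^2/2))"

lemma PP_r_deriv: "b1 > 0 \<Longrightarrow> ((PP b1) has_real_derivative (- (z/b1) * exp (-((z/b1)^2/2)) / b1)) (at z)"
  unfolding PP_def by (rule derivative_eq_intros refl | simp)+
lemma QQ_r_deriv: "b1 > 0 \<Longrightarrow> ((QQ b1) has_real_derivative ((z/b1) * (1 - (z/b1)^2/2) * exp (-((z/b1)^2/2)) / b1)) (at z)"
  unfolding QQ_def
  apply (rule derivative_eq_intros refl | simp)+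
  by (simp_all add: power2_eq_square field_simps)
lemma PP_s_deriv: "z > 0 \<Longrightarrow> ((\<lambda>b1. PP b1 r) has_real_derivative ((r/z)^2 * exp (-((r/z)^2/2)) / z)) (at z)"
  unfolding PP_def
  apply (rule derivative_eq_intros refl | simp)+
  by (simp_all add: power2_eq_square field_simps)
lemma QQ_s_aux: "(z::real) > 0 \<Longrightarrow> E * (r * r) * (r / z)\<^sup>2 / (z * z * z * 2) -
      r * r * E / (z * z * z) =  - ((r / z)\<^sup>2 * (1 - (r / z)\<^sup>2 / 2) * E / z)"
  by (simp add: field_simps power2_eq_square)
lemma QQ_s_deriv: "z > 0 \<Longrightarrow> ((\<lambda>b1. QQ b1 r) has_real_derivative ((- ((r/z)^2 * (1 - (r/z)^2/2) * exp (-((r/z)^2/2)))) / z)) (at z)"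
  unfolding QQ_def
  apply (rule derivative_eq_intros refl | simp)+
  using QQ_s_aux[of z "exp (- ((r / z)\<^sup>2 / 2))" r] by simp

lemma PP_r: assumes "b1 > 0" shows "\<bar>PP b1 r - PP b1 r2\<bar> \<le> (3/2)/b1 * abs (r - r2)"
proof (rule lip_deriv)
  fix z
  show "((PP b1) has_real_derivative (- (z/b1) * exp (-((z/b1)^2/2)) / b1)) (at z)"
    by (rule PP_r_deriv[OF assms])
  show "\<bar>- (z/b1) * exp (-((z/b1)^2/2)) / b1\<bar> \<le> (3/2)/b1"
    using assms by (intro absdiv) (use num1[of "z/b1"] in \<open>simp_all add: abs_mult\<close>)
qed

lemma QQ_r: assumes "b1 > 0" shows "\<bar>QQ b1 r - QQ b1 r2\<bar> \<le> 6/b1 * abs (r - r2)"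
proof (rule lip_deriv)
  fix z
  show "((QQ b1) has_real_derivative ((z/b1) * (1 - (z/b1)^2/2) * exp (-((z/b1)^2/2)) / b1)) (at z)"
    by (rule QQ_r_deriv[OF assms])
  show "\<bar>(z/b1) * (1 - (z/b1)^2/2) * exp (-((z/b1)^2/2)) / b1\<bar> \<le> 6/b1"
    using assms by (intro absdiv) (use num2[of "z/b1"] in \<open>simp_all add: abs_mult\<close>)
qed

lemma PP_s: assumes "b1 > 0" "b1' > 0" shows "\<bar>PP b1 r - PP b1' r\<bar> \<le> 2/min b1 b1' * \<bar>b1 - b1'\<bar>"
proof (rule lip_deriv)
  fix z assume z: "min b1 b1' \<le> z" "z \<le> max b1 b1'"
  hence zp: "z > 0" using assms by linarith
  show "((\<lambda>b1. PP b1 r) has_real_derivative ((r/z)^2 * exp (-((r/z)^2/2)) / z)) (at z)"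
    by (rule PP_s_deriv[OF zp])
  have "\<bar>(r/z)^2 * exp (-((r/z)^2/2)) / z\<bar> \<le> 2 / z"
    using zp by (intro absdiv) (use num3[of "r/z"] in \<open>simp_all add: abs_mult\<close>)
  also have "\<dots> \<le> 2 / min b1 b1'" using z zp assms by (intro divide_left_mono) auto
  finally show "\<bar>(r/z)^2 * exp (-((r/z)^2/2)) / z\<bar> \<le> 2 / min b1 b1'" .
qed

lemma QQ_s: assumes "b1 > 0" "b1' > 0" shows "\<bar>QQ b1 r - QQ b1' r\<bar> \<le> 10/min b1 b1' * \<bar>b1 - b1'\<bar>"
proof (rule lip_deriv)
  fix z assume z: "min b1 b1' \<le> z" "z \<le> max b1 b1'"
  hence zp: "z > 0" using assms by linarith
  show "((\<lambda>b1. QQ b1 r) has_real_derivative ((- ((r/z)^2 * (1 - (r/z)^2/2) * exp (-((r/z)^2/2)))) / z)) (at z)"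
    by (rule QQ_s_deriv[OF zp])
  have "\<bar>(- ((r/z)^2 * (1 - (r/z)^2/2) * exp (-((r/z)^2/2)))) / z\<bar> \<le> 10 / z"
    using zp by (intro absdiv) (use num4[of "r/z"] in \<open>simp_all add: abs_mult\<close>)
  also have "\<dots> \<le> 10 / min b1 b1'" using z zp assms by (intro divide_left_mono) auto
  finally show "\<bar>(- ((r/z)^2 * (1 - (r/z)^2/2) * exp (-((r/z)^2/2)))) / z\<bar> \<le> 10 / min b1 b1'" .
qed


lemma sqdist_nonneg: "0 \<le> sqdist d x y"
  unfolding sqdist_def by (intro sum_nonneg) auto

lemma sqdist_L2: "sqrt (sqdist d x y) = L2_set (\<lambda>k. x k - y k) {..<d}"
  by (simp add: sqdist_def L2_set_def)

lemma vnorm_L2: "vnorm d x = L2_set x {..<d}"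
  by (simp add: vnorm_def L2_set_def)

lemma rho_tri: "sqrt (sqdist d x y) \<le> sqrt (sqdist d x z) + sqrt (sqdist d z y)"
proof -
  have "L2_set (\<lambda>k. x k - y k) {..<d} = L2_set (\<lambda>k. (x k - z k) + (z k - y k)) {..<d}" by simp
  also have "\<dots> \<le> L2_set (\<lambda>k. x k - z k) {..<d} + L2_set (\<lambda>k. z k - y k) {..<d}"
    by (rule L2_set_triangle_ineq)
  finally show ?thesis by (simp add: sqdist_L2)
qed

lemma sqdist_sym: "sqdist d x y = sqdist d y x"
  unfolding sqdist_def by (intro sum.cong) (auto simp: power2_commute)

lemma rho_le_norm: "sqrt (sqdist d x y) \<le> vnorm d x + vnorm d y"
proof -
  have "L2_set (\<lambda>k. x k - y k) {..<d} = L2_set (\<lambda>k. x k + (- y k)) {..<d}" by simp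
  also have "\<dots> \<le> L2_set x {..<d} + L2_set (\<lambda>k. - y k) {..<d}"
    by (rule L2_set_triangle_ineq)
  also have "L2_set (\<lambda>k. - y k) {..<d} = L2_set y {..<d}" by (simp add: L2_set_def)
  finally show ?thesis by (simp add: sqdist_L2 vnorm_L2)
qed

lemma coord_le_vnorm: assumes "k < d" shows "\<bar>x k\<bar> \<le> vnorm d x"
proof -
  have "x k \<le> L2_set x {..<d}" using assms by (intro member_le_L2_set) auto
  moreover have "- x k \<le> L2_set (\<lambda>k. - x k) {..<d}" using assms by (intro member_le_L2_set) auto
  moreover have "L2_set (\<lambda>k. - x k) {..<d} = L2_set x {..<d}" by (simp add: L2_set_def)
  ultimately show ?thesis by (simp add: vnorm_L2)
qed

lemma kf_PP: assumes "\<sigma> > 0" shows "kf d \<sigma> x y = PP \<sigma> (sqrt (sqdist d x y))"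
  using sqdist_nonneg[of d x y] assms
  by (simp add: kf_def PP_def power_divide)

lemma kg_QQ: assumes "\<sigma> > 0" shows "kg d \<sigma> x y = QQ \<sigma> (sqrt (sqdist d x y))"
  using sqdist_nonneg[of d x y] assms
  by (simp add: kg_def QQ_def power_divide ac_simps)

lemma kf_pos: "0 < kf d \<sigma> x y" by (simp add: kf_def)
lemma kf_le1: "kf d \<sigma> x y \<le> 1"
  using sqdist_nonneg[of d x y] by (simp add: kf_def)
lemma kg_nonneg: "0 \<le> kg d \<sigma> x y"
  using sqdist_nonneg[of d x y] by (simp add: kg_def)
lemma kg_le1: "kg d \<sigma> x y \<le> 1"
proof -
  define u where "u = sqdist d x y / (2 * \<sigma>^2)"
  have "u * exp (-u) \<le> exp u * exp (-u)" using u_le_exp[of u] by simp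
  also have "\<dots> = 1" by (simp flip: exp_add)
  finally show ?thesis by (simp add: kg_def u_def)
qed

lemma kg_le_kf: assumes "sqdist d x y / (2 * \<sigma>^2) \<le> S" shows "kg d \<sigma> x y \<le> S * kf d \<sigma> x y"
  unfolding kg_def kf_def using assms by (intro mult_right_mono) auto

lemma rho_diff: "\<bar>sqrt (sqdist d x y) - sqrt (sqdist d x' y)\<bar> \<le> sqrt (sqdist d x x')"
proof -
  have "sqrt (sqdist d x' x) = sqrt (sqdist d x x')" using sqdist_sym[of d x x'] by simp
  then show ?thesis unfolding abs_le_iff using rho_tri[of d x y x'] rho_tri[of d x' y x] by linarith
qed

lemma kf_lip: assumes "\<delta> > 0" "\<sigma> \<ge> \<delta>" "\<sigma>' \<ge> \<delta>"
  shows "\<bar>kf d \<sigma> x y - kf d \<sigma>' x' y\<bar> \<le> 10/\<delta> * (sqrt (sqdist d x x') + \<bar>\<sigma> - \<sigma>'\<bar>)"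
proof -
  define r where "r = sqrt (sqdist d x y)"
  define r' where "r' = sqrt (sqdist d x' y)"
  have s: "\<sigma> > 0" "\<sigma>' > 0" using assms by auto
  have "\<bar>kf d \<sigma> x y - kf d \<sigma>' x' y\<bar> = \<bar>PP \<sigma> r - PP \<sigma>' r'\<bar>"
    using s by (simp add: kf_PP r_def r'_def)
  also have "\<dots> \<le> \<bar>PP \<sigma> r - PP \<sigma> r'\<bar> + \<bar>PP \<sigma> r' - PP \<sigma>' r'\<bar>" by linarith
  also have "\<dots> \<le> (3/2)/\<sigma> * \<bar>r - r'\<bar> + 2/min \<sigma> \<sigma>' * \<bar>\<sigma> - \<sigma>'\<bar>"
    by (intro add_mono PP_r PP_s s)
  also have "\<dots> \<le> 10/\<delta> * sqrt (sqdist d x x') + 10/\<delta> * \<bar>\<sigma> - \<sigma>'\<bar>"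
  proof (intro add_mono mult_mono)
    show "(3/2)/\<sigma> \<le> 10/\<delta>" using assms by (simp add: frac_le)
    show "2/min \<sigma> \<sigma>' \<le> 10/\<delta>" using assms by (simp add: frac_le)
    show "\<bar>r - r'\<bar> \<le> sqrt (sqdist d x x')" unfolding r_def r'_def by (rule rho_diff)
  qed (use assms in auto)
  finally show ?thesis by (simp add: algebra_simps)
qed

lemma kg_lip: assumes "\<delta> > 0" "\<sigma> \<ge> \<delta>" "\<sigma>' \<ge> \<delta>"
  shows "\<bar>kg d \<sigma> x y - kg d \<sigma>' x' y\<bar> \<le> 10/\<delta> * (sqrt (sqdist d x x') + \<bar>\<sigma> - \<sigma>'\<bar>)"
proof -
  define r where "r = sqrt (sqdist d x y)"
  define r' where "r' = sqrt (sqdist d x' y)"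
  have s: "\<sigma> > 0" "\<sigma>' > 0" using assms by auto
  have "\<bar>kg d \<sigma> x y - kg d \<sigma>' x' y\<bar> = \<bar>QQ \<sigma> r - QQ \<sigma>' r'\<bar>"
    using s by (simp add: kg_QQ r_def r'_def)
  also have "\<dots> \<le> \<bar>QQ \<sigma> r - QQ \<sigma> r'\<bar> + \<bar>QQ \<sigma> r' - QQ \<sigma>' r'\<bar>" by linarith
  also have "\<dots> \<le> 6/\<sigma> * \<bar>r - r'\<bar> + 10/min \<sigma> \<sigma>' * \<bar>\<sigma> - \<sigma>'\<bar>"
    by (intro add_mono QQ_r QQ_s s)
  also have "\<dots> \<le> 10/\<delta> * sqrt (sqdist d x x') + 10/\<delta> * \<bar>\<sigma> - \<sigma>'\<bar>"
  proof (intro add_mono mult_mono)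
    show "6/\<sigma> \<le> 10/\<delta>" using assms by (simp add: frac_le)
    show "10/min \<sigma> \<sigma>' \<le> 10/\<delta>" using assms by (simp add: frac_le)
    show "\<bar>r - r'\<bar> \<le> sqrt (sqdist d x x')" unfolding r_def r'_def by (rule rho_diff)
  qed (use assms in auto)
  finally show ?thesis by (simp add: algebra_simps)
qed


definition SG :: "real \<Rightarrow> nat \<Rightarrow> real set" where
  "SG \<delta> n = (\<lambda>k. \<delta> + real k / real n) ` {0..n*n}"
definition CG :: "nat \<Rightarrow> real set" where
  "CG n = (\<lambda>k. real_of_int k / real n) ` {-(int (n*n)) - 1 .. int (n*n)}"
definition XG :: "nat \<Rightarrow> nat \<Rightarrow> (nat \<Rightarrow> real) set" where
  "XG d n = PiE {..<d} (\<lambda>_. CG n)"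
definition Rn :: "real \<Rightarrow> nat \<Rightarrow> nat \<Rightarrow> real" where
  "Rn c1 d n = sqrt (real d) + sqrt (3 * ln (real n) / c1)"
definition tn :: "nat \<Rightarrow> nat \<Rightarrow> real" where
  "tn d n = sqrt ((real d + 2) * ln (real n) / real n)"
definition Ev :: "'a measure \<Rightarrow> (nat \<Rightarrow> 'a \<Rightarrow> (nat \<Rightarrow> real)) \<Rightarrow> nat \<Rightarrow> (nat \<Rightarrow> real) measure
     \<Rightarrow> ((nat \<Rightarrow> real) \<Rightarrow> real) \<Rightarrow> real \<Rightarrow> 'a set" where
  "Ev M X n \<mu> h t = {\<omega>\<in>space M. t \<le> \<bar>(\<Sum>j\<in>{1..n}. h (X j \<omega>)) / real n - (\<integral>y. h y \<partial>\<mu>)\<bar>}"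
definition Bad :: "'a measure \<Rightarrow> (nat \<Rightarrow> 'a \<Rightarrow> (nat \<Rightarrow> real)) \<Rightarrow> nat \<Rightarrow> real measure
     \<Rightarrow> real \<Rightarrow> real \<Rightarrow> nat \<Rightarrow> 'a set" where
  "Bad M X d \<nu> c1 \<delta> n = (\<Union>i\<in>{1..n}. {\<omega>\<in>space M. Rn c1 d n \<le> vnorm d (X i \<omega>)}) \<union>
     (\<Union>p\<in>XG d n \<times> SG \<delta> n. Ev M X n (vec_law d \<nu>) (kf d (snd p) (fst p)) (tn d n)
                         \<union> Ev M X n (vec_law d \<nu>) (kg d (snd p) (fst p)) (tn d n))"

lemma finite_CG: "finite (CG n)" unfolding CG_def by simp
lemma card_CG: "card (CG n) \<le> 2*n^2 + 2"
proof -
  have "card (CG n) \<le> card {-(int (n*n)) - 1 .. int (n*n)}" unfolding CG_def by (rule card_image_le) simp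
  also have "\<dots> = 2*n^2 + 2" by (simp add: power2_eq_square nat_add_distrib nat_mult_distrib)
  finally show ?thesis .
qed
lemma finite_SG: "finite (SG \<delta> n)" unfolding SG_def by simp
lemma card_SG: "card (SG \<delta> n) \<le> n^2 + 1"
proof -
  have "card (SG \<delta> n) \<le> card {0..n*n}" unfolding SG_def by (rule card_image_le) simp
  also have "\<dots> = n^2 + 1" by (simp add: power2_eq_square)
  finally show ?thesis .
qed
lemma finite_XG: "finite (XG d n)" unfolding XG_def by (intro finite_PiE finite_CG) auto
lemma card_XG: "card (XG d n) \<le> (2*n^2 + 2)^d"
proof -
  have "card (XG d n) = card (CG n) ^ d" unfolding XG_def by (simp add: card_PiE)
  also have "\<dots> \<le> (2*n^2 + 2)^d" by (intro power_mono card_CG) auto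
  finally show ?thesis .
qed

lemma exp_ln_pow: assumes "n \<ge> 1" shows "exp (- (real k * ln (real n))) = 1 / real n ^ k"
proof -
  have "exp (real k * ln (real n)) = exp (ln (real n)) ^ k" by (rule exp_of_nat_mult)
  also have "\<dots> = real n ^ k" using assms by simp
  finally show ?thesis by (simp add: exp_minus field_simps)
qed

lemma tn_sq: assumes "n \<ge> 1" shows "2 * real n * (tn d n)^2 = real (2*d+4) * ln (real n)"
proof -
  have "0 \<le> (real d + 2) * ln (real n) / real n" using assms by simp
  then show ?thesis using assms by (simp add: tn_def field_simps)
qed

lemma Rt_sq: assumes "n \<ge> 1" "c1 > 0" shows "c1 * (sqrt (3 * ln (real n) / c1))^2 = real 3 * ln (real n)"
proof -
  have "0 \<le> 3 * ln (real n) / c1" using assms by simp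
  then show ?thesis using assms by simp
qed

lemma final_count:
  assumes "n \<ge> 1"
  shows "real ((2*n^2+2)^d * (n^2+1)) * 4 * (1 / real n ^ (2*d+4)) \<le> 8 * 4^d / real n ^ 2"
proof -
  have n: "real n \<ge> 1" using assms by simp
  have nn: "1 \<le> real n ^ 2" using n by (simp add: one_le_power)
  have a: "real (2*n^2+2) \<le> 4 * real n ^ 2"
  proof -
    have "real (2*n^2+2) = 2 * real n ^ 2 + 2" by simp
    then show ?thesis using nn by linarith
  qed
  have b: "real (n^2+1) \<le> 2 * real n ^ 2"
  proof -
    have "real (n^2+1) = real n ^ 2 + 1" by simp
    then show ?thesis using nn by linarith
  qed
  have "real ((2*n^2+2)^d * (n^2+1)) = real (2*n^2+2) ^ d * real (n^2+1)" by (simp only: of_nat_mult of_nat_power)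
  also have "\<dots> \<le> (4 * real n ^ 2) ^ d * (2 * real n ^ 2)"
    using a b by (intro mult_mono power_mono) auto
  also have "\<dots> = 2 * 4^d * ((real n ^ 2) ^ d * real n ^ 2)" by (simp add: power_mult_distrib)
  also have "2 * 4^d * ((real n ^ 2) ^ d * real n ^ 2) = (2 * 4^d * real n ^ (2*d+2) :: real)"
  proof -
    have e: "(real n ^ 2) ^ d * real n ^ 2 = real n ^ (2*d+2)" by (simp add: power_add power_mult power2_eq_square)
    show ?thesis by (simp only: e)
  qed
  finally have c: "real ((2*n^2+2)^d * (n^2+1)) \<le> 2 * 4^d * real n ^ (2*d+2)" .
  have "real ((2*n^2+2)^d * (n^2+1)) * 4 * (1 / real n ^ (2*d+4)) \<le> 2 * 4^d * real n ^ (2*d+2) * 4 * (1 / real n ^ (2*d+4))"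
    using c n by (intro mult_right_mono) auto
  also have "\<dots> = 8 * 4^d / real n ^ 2"
  proof -
    have e: "real n ^ (2*d+4) = real n ^ (2*d+2) * real n ^ 2"
      by (metis power_add add.assoc numeral_Bit0 numeral_One one_add_one)
    have p: "real n ^ (2*d+2) > 0" "real n ^ 2 > 0" using n by simp_all
    show ?thesis unfolding e using p by (simp add: divide_simps)
  qed
  finally show ?thesis .
qed

lemma grid_approx:
  assumes n: "n \<ge> 1" and d0: "\<delta> > 0" and xn: "vnorm d x \<le> real n"
    and s1: "\<delta> \<le> \<sigma>" and s2: "\<sigma> \<le> sqrt (real n)"
  obtains x' \<sigma>' where "x' \<in> XG d n" "\<sigma>' \<in> SG \<delta> n" "sqrt (sqdist d x x') \<le> sqrt (real d) / real n"
    "\<bar>\<sigma> - \<sigma>'\<bar> \<le> 1 / real n" "\<delta> \<le> \<sigma>'"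
proof -
  have np: "real n > 0" using n by simp
  define x' where "x' = restrict (\<lambda>k. real_of_int \<lfloor>x k * real n\<rfloor> / real n) {..<d}"
  define k where "k = nat \<lfloor>(\<sigma> - \<delta>) * real n\<rfloor>"
  define \<sigma>' where "\<sigma>' = \<delta> + real k / real n"
  have kf: "real k = real_of_int \<lfloor>(\<sigma> - \<delta>) * real n\<rfloor>" unfolding k_def using s1 np by simp
  have k1: "real k \<le> (\<sigma> - \<delta>) * real n" "(\<sigma> - \<delta>) * real n < real k + 1" unfolding kf by linarith+
  have sqn: "sqrt (real n) \<le> real n"
  proof -
    have "sqrt (real n) \<le> sqrt (real n) * sqrt (real n)" using n by (intro mult_le_cancel_left1[THEN iffD2]) auto
    then show ?thesis by simp
  qed
  have "real k \<le> real n * real n"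
  proof -
    have "(\<sigma> - \<delta>) * real n \<le> real n * real n" using s2 sqn d0 np by (intro mult_right_mono) auto
    then show ?thesis using k1 by linarith
  qed
  then have kle: "k \<le> n * n" by (metis of_nat_le_iff of_nat_mult)
  have "\<sigma>' \<in> SG \<delta> n" unfolding SG_def \<sigma>'_def using kle by auto
  moreover have "\<bar>\<sigma> - \<sigma>'\<bar> \<le> 1 / real n"
  proof -
    have "\<sigma>' \<le> \<sigma>" unfolding \<sigma>'_def using k1 np by (simp add: field_simps)
    moreover have "\<sigma> - \<sigma>' \<le> 1 / real n"
    proof -
      have "(\<sigma> - \<sigma>') * real n = (\<sigma> - \<delta>) * real n - real k" unfolding \<sigma>'_def using np by (simp add: field_simps)
      then have "(\<sigma> - \<sigma>') * real n \<le> 1" using k1 by linarith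
      then show ?thesis using np by (simp add: pos_le_divide_eq)
    qed
    ultimately show ?thesis by simp
  qed
  moreover have "\<delta> \<le> \<sigma>'" unfolding \<sigma>'_def using np by simp
  moreover have "x' \<in> XG d n"
  proof -
    have "real_of_int \<lfloor>x j * real n\<rfloor> / real n \<in> CG n" if j: "j < d" for j
    proof -
      have "\<bar>x j\<bar> \<le> real n" using coord_le_vnorm[OF j, of x] xn by simp
      then have a: "\<bar>x j * real n\<bar> \<le> real n * real n" using np by (simp add: abs_mult mult_right_mono)
      have "\<lfloor>x j * real n\<rfloor> \<le> int (n*n)"
      proof -
        have "x j * real n \<le> real (n*n)" using a by simp
        then show ?thesis by (metis floor_le_iff of_int_of_nat_eq floor_of_nat le_floor_iff floor_mono)
      qed
      moreover have "-(int (n*n)) - 1 \<le> \<lfloor>x j * real n\<rfloor>"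
      proof -
        have "- real (n*n) \<le> x j * real n" using a by simp
        then show ?thesis by linarith
      qed
      ultimately show ?thesis unfolding CG_def by auto
    qed
    then show ?thesis unfolding XG_def x'_def by auto
  qed
  moreover have "sqrt (sqdist d x x') \<le> sqrt (real d) / real n"
  proof -
    have "sqdist d x x' \<le> (\<Sum>j<d. (1 / real n)^2)" unfolding sqdist_def
    proof (intro sum_mono)
      fix j assume "j \<in> {..<d}"
      then have xj: "x' j * real n = real_of_int \<lfloor>x j * real n\<rfloor>" using np unfolding x'_def by simp
      have f1: "real_of_int \<lfloor>x j * real n\<rfloor> \<le> x j * real n" by (rule of_int_floor_le)
      have f2: "x j * real n < real_of_int \<lfloor>x j * real n\<rfloor> + 1" by linarith
      have p: "(x j - x' j) * real n = x j * real n - x' j * real n" by (simp add: algebra_simps)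
      have e: "0 \<le> (x j - x' j) * real n" "(x j - x' j) * real n \<le> 1" using p xj f1 f2 by linarith+
      then have "0 \<le> x j - x' j" using np by (simp add: zero_le_mult_iff)
      moreover have "x j - x' j \<le> 1 / real n" using e np by (simp add: pos_le_divide_eq)
      ultimately have "0 \<le> x j - x' j" "x j - x' j \<le> 1 / real n" by auto
      then show "(x j - x' j)^2 \<le> (1 / real n)^2" by (intro power_mono) auto
    qed
    also have "\<dots> = real d / (real n)^2" by (simp add: power_divide)
    finally have "sqrt (sqdist d x x') \<le> sqrt (real d / (real n)^2)" by (rule real_sqrt_le_mono)
    also have "\<dots> = sqrt (real d) / real n" using np by (simp add: real_sqrt_divide)
    finally show ?thesis .
  qed
  ultimately show ?thesis using that by blast
qed

lemma unif_dev:
  fixes K :: "real \<Rightarrow> (nat \<Rightarrow> real) \<Rightarrow> (nat \<Rightarrow> real) \<Rightarrow> real" and P :: "real \<Rightarrow> (nat \<Rightarrow> real) \<Rightarrow> real"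
    and Y :: "nat \<Rightarrow> (nat \<Rightarrow> real)"
  assumes lip: "\<And>\<sigma> \<sigma>' x x' y. \<delta> \<le> \<sigma> \<Longrightarrow> \<delta> \<le> \<sigma>' \<Longrightarrow> \<bar>K \<sigma> x y - K \<sigma>' x' y\<bar> \<le> L * (sqrt (sqdist d x x') + \<bar>\<sigma> - \<sigma>'\<bar>)"
    and Plip: "\<And>\<sigma> \<sigma>' x x'. \<delta> \<le> \<sigma> \<Longrightarrow> \<delta> \<le> \<sigma>' \<Longrightarrow> \<bar>P \<sigma> x - P \<sigma>' x'\<bar> \<le> L * (sqrt (sqdist d x x') + \<bar>\<sigma> - \<sigma>'\<bar>)"
    and grid: "\<And>x' \<sigma>'. x' \<in> XG d n \<Longrightarrow> \<sigma>' \<in> SG \<delta> n \<Longrightarrow> \<bar>(\<Sum>j\<in>{1..n}. K \<sigma>' x' (Y j)) / real n - P \<sigma>' x'\<bar> < t"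
    and n: "n \<ge> 1" and d0: "\<delta> > 0" and L: "L \<ge> 0" and xn: "vnorm d x \<le> real n"
    and s1: "\<delta> \<le> \<sigma>" and s2: "\<sigma> \<le> sqrt (real n)"
  shows "\<bar>(\<Sum>j\<in>{1..n}. K \<sigma> x (Y j)) / real n - P \<sigma> x\<bar> \<le> t + 2 * L * (sqrt (real d) / real n + 1 / real n)"
proof -
  have np: "real n > 0" using n by simp
  obtain x' \<sigma>' where g: "x' \<in> XG d n" "\<sigma>' \<in> SG \<delta> n" "sqrt (sqdist d x x') \<le> sqrt (real d) / real n"
    "\<bar>\<sigma> - \<sigma>'\<bar> \<le> 1 / real n" "\<delta> \<le> \<sigma>'"
    using grid_approx[OF n d0 xn s1 s2] by blast
  define D where "D = sqrt (real d) / real n + 1 / real n"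
  have LD: "L * (sqrt (sqdist d x x') + \<bar>\<sigma> - \<sigma>'\<bar>) \<le> L * D"
    unfolding D_def using g L by (intro mult_left_mono) auto
  define A where "A = (\<Sum>j\<in>{1..n}. K \<sigma> x (Y j)) / real n"
  define A' where "A' = (\<Sum>j\<in>{1..n}. K \<sigma>' x' (Y j)) / real n"
  have "\<bar>A - A'\<bar> = \<bar>\<Sum>j\<in>{1..n}. K \<sigma> x (Y j) - K \<sigma>' x' (Y j)\<bar> / real n"
    unfolding A_def A'_def using np by (simp add: sum_subtractf diff_divide_distrib[symmetric])
  also have "\<dots> \<le> (\<Sum>j\<in>{1..n}. \<bar>K \<sigma> x (Y j) - K \<sigma>' x' (Y j)\<bar>) / real n"
    using np by (intro divide_right_mono sum_abs) auto
  also have "\<dots> \<le> (\<Sum>j\<in>{1..n}. L * D) / real n"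
    using np by (intro divide_right_mono sum_mono order.trans[OF lip LD] s1 g(5)) auto
  also have "\<dots> = L * D" using np by simp
  finally have a1: "\<bar>A - A'\<bar> \<le> L * D" .
  have a2: "\<bar>A' - P \<sigma>' x'\<bar> < t" unfolding A'_def by (rule grid[OF g(1,2)])
  have a3: "\<bar>P \<sigma> x - P \<sigma>' x'\<bar> \<le> L * D" by (rule order.trans[OF Plip LD]) (use s1 g in auto)
  have "\<bar>A - P \<sigma> x\<bar> \<le> t + 2 * (L * D)" using a1 a2 a3 by linarith
  then show ?thesis unfolding A_def D_def by simp
qed



lemma ln_le_powr: fixes N p :: real assumes "N \<ge> 1" "p > 0" shows "ln N \<le> N powr p / p"
proof -
  have N0: "N \<noteq> 0" using assms by simp
  have "p * ln N = ln (N powr p)" using N0 by (simp add: ln_powr)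
  also have "\<dots> \<le> N powr p" using assms by (intro ln_le_minus_one[THEN order.trans]) auto
  finally show ?thesis using assms by (simp add: field_simps)
qed

lemma ratio_bound:
  fixes Fn Gn F G e S c0 q N K1 a b :: real
  assumes Fpos: "Fn > 0" and Gn0: "Gn \<ge> 0" and GnS: "Gn \<le> S * Fn"
    and F1: "F \<le> 1" and G0: "0 \<le> G" and G1: "G \<le> 1"
    and dF: "\<bar>Fn - F\<bar> \<le> e" and dG: "\<bar>Gn - G\<bar> \<le> e"
    and c0: "c0 > 0" and Flow: "F \<ge> c0 * N powr (-3*q)"
    and K1: "K1 \<ge> 0" and ebd: "e \<le> K1 * sqrt (ln N) * N powr (-1/2)"
    and ab: "a \<ge> 0" "b \<ge> 0" and Sbd: "S \<le> a + b * ln N"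
    and N: "N \<ge> 1" and q: "q > 0"
  shows "\<bar>Gn / Fn - G / F\<bar> \<le> (4*K1/c0^2 + 2*K1/c0^2 + (a + b/(5*q)) * (2*K1/c0)) * (N powr (8*q - 1/2) * sqrt (ln N))"
proof -
  define T where "T = N powr (8*q - 1/2) * sqrt (ln N)"
  have T0: "T \<ge> 0" unfolding T_def using N by simp
  have Fp: "F > 0" using Flow c0 N by (smt (verit) mult_pos_pos powr_gt_zero)
  have e0: "e \<ge> 0" using dF by linarith
  have pw: "N powr x * N powr y = N powr (x + y)" for x y by (simp add: powr_add)
  have Fsq: "1 / F^2 \<le> N powr (6*q) / c0^2"
  proof -
    have "c0 * N powr (-3*q) > 0" using c0 N by simp
    then have "(c0 * N powr (-3*q))^2 \<le> F^2" using Flow by (intro power_mono) auto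
    moreover have "(c0 * N powr (-3*q))^2 = c0^2 / N powr (6*q)"
    proof -
      have "(N powr (-3*q))^2 = N powr (-3*q + -3*q)" by (simp add: power2_eq_square pw)
      also have "\<dots> = 1 / N powr (6*q)" by (simp add: powr_minus_divide)
      finally show ?thesis by (simp add: power_mult_distrib)
    qed
    ultimately have "c0^2 / N powr (6*q) \<le> F^2" by simp
    then show ?thesis using c0 N Fp by (simp add: field_simps)
  qed
  have Finv: "1 / F \<le> N powr (3*q) / c0"
  proof -
    have "c0 * N powr (-3*q) = c0 / N powr (3*q)" using N by (simp add: powr_minus divide_inverse)
    then have "c0 / N powr (3*q) \<le> F" using Flow by simp
    then show ?thesis using c0 N Fp by (simp add: field_simps)
  qed
  define K where "K = 4*K1/c0^2 + 2*K1/c0^2 + (a + b/(5*q)) * (2*K1/c0)"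
  have k1: "0 \<le> 4*K1/c0^2" "0 \<le> 2*K1/c0^2" "0 \<le> (a + b/(5*q)) * (2*K1/c0)"
    using K1 c0 ab q by auto
  show ?thesis
  proof (cases "F \<ge> 2 * e")
    case True
    have Fn2: "Fn \<ge> F / 2" using True dF by linarith
    have "\<bar>Gn / Fn - G / F\<bar> = \<bar>(Gn - G) * F + G * (F - Fn)\<bar> / (F * Fn)"
      using Fpos Fp by (simp add: field_simps abs_divide abs_mult)
    also have "\<dots> \<le> (2 * e) / (F * Fn)"
    proof (intro divide_right_mono)
      have "\<bar>(Gn - G) * F + G * (F - Fn)\<bar> \<le> \<bar>Gn - G\<bar> * F + G * \<bar>F - Fn\<bar>"
        by (rule order.trans[OF abs_triangle_ineq]) (use Fp G0 in \<open>simp add: abs_mult\<close>)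
      also have "\<dots> \<le> e * 1 + 1 * e"
        using dG dF Fp F1 G0 G1 e0 by (intro add_mono mult_mono) (auto simp: abs_minus_commute)
      finally show "\<bar>(Gn - G) * F + G * (F - Fn)\<bar> \<le> 2 * e" by simp
    qed (use Fpos Fp in auto)
    also have "\<dots> \<le> 2 * e / (F * (F / 2))"
      using Fpos Fp Fn2 e0 by (intro divide_left_mono mult_left_mono) auto
    also have "\<dots> = 4 * e * (1 / F^2)" using Fp by (simp add: field_simps power2_eq_square)
    also have "\<dots> \<le> 4 * (K1 * sqrt (ln N) * N powr (-1/2)) * (N powr (6*q) / c0^2)"
      using ebd Fsq e0 by (intro mult_mono) auto
    also have "\<dots> = 4*K1/c0^2 * (N powr (6*q - 1/2) * sqrt (ln N))"
      by (simp add: field_simps pw[symmetric] flip: powr_add)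
    also have "\<dots> \<le> 4*K1/c0^2 * T"
      unfolding T_def using N q k1 by (intro mult_left_mono mult_right_mono powr_mono) auto
    also have "\<dots> \<le> K * T" unfolding K_def using k1 T0 by (intro mult_right_mono) auto
    finally show ?thesis unfolding K_def T_def .
  next
    case False
    have W: "1 \<le> (2*K1/c0) * sqrt (ln N) * N powr (3*q - 1/2)"
    proof -
      have "c0 * N powr (-3*q) < 2 * (K1 * sqrt (ln N) * N powr (-1/2))" using False Flow ebd by linarith
      then have "c0 * N powr (-3*q) * N powr (3*q) < 2 * (K1 * sqrt (ln N) * N powr (-1/2)) * N powr (3*q)"
        using N by (intro mult_strict_right_mono) auto
      also have "c0 * N powr (-3*q) * N powr (3*q) = c0" using N by (simp add: mult.assoc pw)
      also have "2 * (K1 * sqrt (ln N) * N powr (-1/2)) * N powr (3*q) = 2 * K1 * sqrt (ln N) * N powr (3*q - 1/2)"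
      proof -
        have e: "N powr (-1/2) * N powr (3*q) = N powr (3*q - 1/2)" by (simp add: pw)
        show ?thesis by (simp only: mult.assoc e)
      qed
      finally have "c0 < 2 * K1 * sqrt (ln N) * N powr (3*q - 1/2)" .
      then show ?thesis using c0 by (simp add: field_simps)
    qed
    have q1: "\<bar>Gn / Fn - G / F\<bar> \<le> S + 1 / F"
    proof -
      have "Gn / Fn \<le> S" using GnS Fpos by (simp add: divide_le_eq)
      moreover have "G / F \<le> 1 / F" using G1 Fp by (simp add: divide_right_mono)
      moreover have "0 \<le> Gn / Fn" "0 \<le> G / F" using Gn0 Fpos G0 Fp by auto
      ultimately show ?thesis by linarith
    qed
    have q2: "1 / F \<le> 2*K1/c0^2 * T"
    proof -
      have "1 / F \<le> N powr (3*q) / c0 * 1" using Finv by simp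
      also have "\<dots> \<le> N powr (3*q) / c0 * ((2*K1/c0) * sqrt (ln N) * N powr (3*q - 1/2))"
        using W c0 N by (intro mult_left_mono) auto
      also have "\<dots> = 2*K1/c0^2 * (N powr (6*q - 1/2) * sqrt (ln N))"
        using c0 by (simp add: field_simps power2_eq_square pw[symmetric] flip: powr_add)
      also have "\<dots> \<le> 2*K1/c0^2 * T"
        unfolding T_def using N q k1 by (intro mult_left_mono mult_right_mono powr_mono) auto
      finally show ?thesis .
    qed
    have q3: "S \<le> (a + b/(5*q)) * (2*K1/c0) * T"
    proof -
      have P1: "1 \<le> N powr (5*q)" using N q by (simp add: ge_one_powr_ge_zero)
      have "S \<le> a + b * ln N" by (rule Sbd)
      also have "\<dots> \<le> a * N powr (5*q) + b * (N powr (5*q) / (5*q))"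
        using ab P1 ln_le_powr[OF N, of "5*q"] q
        by (intro add_mono mult_left_mono) (auto simp: mult_le_cancel_left1)
      also have "\<dots> = (a + b/(5*q)) * N powr (5*q)" using q by (simp add: field_simps)
      also have "\<dots> \<le> (a + b/(5*q)) * N powr (5*q) * ((2*K1/c0) * sqrt (ln N) * N powr (3*q - 1/2))"
        using mult_left_mono[OF W, of "(a + b/(5*q)) * N powr (5*q)"] ab q N by simp
      also have "\<dots> = (a + b/(5*q)) * (2*K1/c0) * (N powr (8*q - 1/2) * sqrt (ln N))"
        by (simp add: field_simps pw[symmetric] flip: powr_add)
      finally show ?thesis unfolding T_def .
    qed
    have "\<bar>Gn / Fn - G / F\<bar> \<le> 2*K1/c0^2 * T + (a + b/(5*q)) * (2*K1/c0) * T" using q1 q2 q3 by linarith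
    also have "\<dots> \<le> K * T"
    proof -
      have "K * T = 4*K1/c0^2 * T + 2*K1/c0^2 * T + (a + b/(5*q)) * (2*K1/c0) * T"
        unfolding K_def by (simp only: distrib_right)
      moreover have "0 \<le> 4*K1/c0^2 * T" using k1(1) T0 by (rule mult_nonneg_nonneg)
      ultimately show ?thesis by linarith
    qed
    finally show ?thesis unfolding K_def T_def .
  qed
qed

context
  fixes \<nu> :: "real measure" and d :: nat
  assumes nu_prob: "prob_space \<nu>" and nu_sets: "sets \<nu> = sets borel"
begin

lemma vl_prob: "prob_space (vec_law d \<nu>)"
  unfolding vec_law_def using nu_prob by (intro prob_space_PiM) auto

lemma comp_meas: assumes "k < d" shows "(\<lambda>y. y k) \<in> borel_measurable (vec_law d \<nu>)"
proof -
  have "(\<lambda>y. y k) \<in> vec_law d \<nu> \<rightarrow>\<^sub>M \<nu>" unfolding vec_law_def using assms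
    by (intro measurable_component_singleton) auto
  moreover have "vec_law d \<nu> \<rightarrow>\<^sub>M \<nu> = borel_measurable (vec_law d \<nu>)"
    by (rule measurable_cong_sets) (auto simp: nu_sets)
  ultimately show ?thesis by simp
qed

lemma sqdist_meas: "(\<lambda>y. sqdist d x y) \<in> borel_measurable (vec_law d \<nu>)"
  unfolding sqdist_def
  by (intro borel_measurable_sum borel_measurable_power borel_measurable_diff comp_meas) auto

lemma vnorm_meas: "(\<lambda>y. vnorm d y) \<in> borel_measurable (vec_law d \<nu>)"
proof -
  have [measurable]: "(\<lambda>y. \<Sum>k<d. (y k)^2) \<in> borel_measurable (vec_law d \<nu>)"
    by (intro borel_measurable_sum borel_measurable_power comp_meas) auto
  show ?thesis unfolding vnorm_def by measurable
qed

lemma kf_meas: "kf d \<sigma> x \<in> borel_measurable (vec_law d \<nu>)"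
proof -
  have [measurable]: "(\<lambda>y. sqdist d x y) \<in> borel_measurable (vec_law d \<nu>)" by (rule sqdist_meas)
  show ?thesis unfolding kf_def by measurable
qed

lemma kg_meas: "kg d \<sigma> x \<in> borel_measurable (vec_law d \<nu>)"
proof -
  have [measurable]: "(\<lambda>y. sqdist d x y) \<in> borel_measurable (vec_law d \<nu>)" by (rule sqdist_meas)
  show ?thesis unfolding kg_def by measurable
qed

lemma bounded_integrable:
  fixes f :: "(nat \<Rightarrow> real) \<Rightarrow> real"
  assumes "f \<in> borel_measurable (vec_law d \<nu>)" "\<And>y. \<bar>f y\<bar> \<le> 1"
  shows "integrable (vec_law d \<nu>) f"
proof -
  interpret prob_space "vec_law d \<nu>" by (rule vl_prob)
  show ?thesis using assms by (intro integrable_const_bound[where B=1] AE_I2) auto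
qed

lemma kf_int: "integrable (vec_law d \<nu>) (kf d \<sigma> x)"
  using kf_pos kf_le1 by (intro bounded_integrable kf_meas) (simp add: abs_le_iff less_imp_le)
lemma kg_int: "integrable (vec_law d \<nu>) (kg d \<sigma> x)"
  using kg_nonneg kg_le1 by (intro bounded_integrable kg_meas) (simp add: abs_le_iff)

lemma int_diff_bound:
  fixes f g :: "(nat \<Rightarrow> real) \<Rightarrow> real"
  assumes "integrable (vec_law d \<nu>) f" "integrable (vec_law d \<nu>) g" "\<And>y. \<bar>f y - g y\<bar> \<le> c"
  shows "\<bar>(\<integral>y. f y \<partial>vec_law d \<nu>) - (\<integral>y. g y \<partial>vec_law d \<nu>)\<bar> \<le> c"
proof -
  interpret prob_space "vec_law d \<nu>" by (rule vl_prob)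
  have "(\<integral>y. f y \<partial>vec_law d \<nu>) - (\<integral>y. g y \<partial>vec_law d \<nu>) = (\<integral>y. f y - g y \<partial>vec_law d \<nu>)"
    using assms by simp
  also have "\<bar>\<dots>\<bar> \<le> (\<integral>y. \<bar>f y - g y\<bar> \<partial>vec_law d \<nu>)"
    by (rule Bochner_Integration.integral_abs_bound)
  also have "\<dots> \<le> (\<integral>y. c \<partial>vec_law d \<nu>)"
    using assms by (intro integral_mono) auto
  also have "\<dots> = c" by (simp add: prob_space)
  finally show ?thesis .
qed

lemma int_bounds: "0 \<le> (\<integral>y. h y \<partial>vec_law d \<nu>)" "(\<integral>y. h y \<partial>vec_law d \<nu>) \<le> 1"
  if "integrable (vec_law d \<nu>) h" "\<And>y. 0 \<le> h y" "\<And>y. h y \<le> 1" for h :: "(nat \<Rightarrow> real) \<Rightarrow> real"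
proof -
  interpret prob_space "vec_law d \<nu>" by (rule vl_prob)
  show "0 \<le> (\<integral>y. h y \<partial>vec_law d \<nu>)" using that by (intro Bochner_Integration.integral_nonneg) auto
  have "(\<integral>y. h y \<partial>vec_law d \<nu>) \<le> (\<integral>y. 1 \<partial>vec_law d \<nu>)" using that by (intro integral_mono) auto
  then show "(\<integral>y. h y \<partial>vec_law d \<nu>) \<le> 1" by (simp add: prob_space)
qed

lemma Fp_bounds: "0 \<le> (\<integral>y. kf d \<sigma> x y \<partial>vec_law d \<nu>)" "(\<integral>y. kf d \<sigma> x y \<partial>vec_law d \<nu>) \<le> 1"
  using int_bounds[OF kf_int] kf_pos kf_le1 by (auto simp: less_imp_le)
lemma Gp_bounds: "0 \<le> (\<integral>y. kg d \<sigma> x y \<partial>vec_law d \<nu>)" "(\<integral>y. kg d \<sigma> x y \<partial>vec_law d \<nu>) \<le> 1"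
  using int_bounds[OF kg_int] kg_nonneg kg_le1 by auto

lemma Fp_lip: assumes "\<delta> > 0" "\<sigma> \<ge> \<delta>" "\<sigma>' \<ge> \<delta>"
  shows "\<bar>(\<integral>y. kf d \<sigma> x y \<partial>vec_law d \<nu>) - (\<integral>y. kf d \<sigma>' x' y \<partial>vec_law d \<nu>)\<bar>
     \<le> 10/\<delta> * (sqrt (sqdist d x x') + \<bar>\<sigma> - \<sigma>'\<bar>)"
  by (intro int_diff_bound kf_int kf_lip assms)
lemma Gp_lip: assumes "\<delta> > 0" "\<sigma> \<ge> \<delta>" "\<sigma>' \<ge> \<delta>"
  shows "\<bar>(\<integral>y. kg d \<sigma> x y \<partial>vec_law d \<nu>) - (\<integral>y. kg d \<sigma>' x' y \<partial>vec_law d \<nu>)\<bar>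
     \<le> 10/\<delta> * (sqrt (sqdist d x x') + \<bar>\<sigma> - \<sigma>'\<bar>)"
  by (intro int_diff_bound kg_int kg_lip assms)

lemma Fp_lower:
  assumes "\<delta> > 0" "\<sigma> \<ge> \<delta>" "r0 \<ge> 0"
    and half: "measure (vec_law d \<nu>) {y \<in> space (vec_law d \<nu>). vnorm d y \<ge> r0} \<le> 1/2"
  shows "(\<integral>y. kf d \<sigma> x y \<partial>vec_law d \<nu>) \<ge> 1/2 * exp (- ((vnorm d x + r0)^2 / (2*\<delta>^2)))"
proof -
  interpret prob_space "vec_law d \<nu>" by (rule vl_prob)
  define c where "c = exp (- ((vnorm d x + r0)^2 / (2*\<delta>^2)))"
  define A where "A = {y \<in> space (vec_law d \<nu>). vnorm d y < r0}"
  have [measurable]: "(\<lambda>y. vnorm d y) \<in> borel_measurable (vec_law d \<nu>)" by (rule vnorm_meas)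
  have Am: "A \<in> sets (vec_law d \<nu>)" unfolding A_def by measurable
  have Bm: "{y \<in> space (vec_law d \<nu>). vnorm d y \<ge> r0} \<in> sets (vec_law d \<nu>)" by measurable
  have "space (vec_law d \<nu>) - {y \<in> space (vec_law d \<nu>). vnorm d y \<ge> r0} = A"
    unfolding A_def by auto
  then have "measure (vec_law d \<nu>) A = 1 - measure (vec_law d \<nu>) {y \<in> space (vec_law d \<nu>). vnorm d y \<ge> r0}"
    using prob_compl[OF Bm] by simp
  then have mA: "measure (vec_law d \<nu>) A \<ge> 1/2" using half by simp
  have pt: "indicator A y * c \<le> kf d \<sigma> x y" for y
  proof (cases "y \<in> A")
    case True
    then have vy: "vnorm d y < r0" unfolding A_def by auto
    have vn: "0 \<le> vnorm d x" "0 \<le> vnorm d y" by (auto simp: vnorm_def intro!: sum_nonneg)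
    have "sqdist d x y = (sqrt (sqdist d x y))^2" using sqdist_nonneg[of d x y] by simp
    also have "\<dots> \<le> (vnorm d x + r0)^2"
      using rho_le_norm[of d x y] vy vn sqdist_nonneg[of d x y] by (intro power_mono) auto
    finally have s1: "sqdist d x y \<le> (vnorm d x + r0)^2" .
    have "sqdist d x y / (2*\<sigma>^2) \<le> (vnorm d x + r0)^2 / (2*\<sigma>^2)"
      using s1 assms by (intro divide_right_mono) auto
    also have "\<dots> \<le> (vnorm d x + r0)^2 / (2*\<delta>^2)"
      using assms by (intro divide_left_mono mult_left_mono power_mono) auto
    finally have "c \<le> kf d \<sigma> x y" unfolding c_def kf_def by simp
    then show ?thesis using True by simp
  next
    case False then show ?thesis using kf_pos[of d \<sigma> x y] by simp
  qed
  have "(\<integral>y. indicator A y * c \<partial>vec_law d \<nu>) \<le> (\<integral>y. kf d \<sigma> x y \<partial>vec_law d \<nu>)"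
    using pt Am by (intro integral_mono kf_int integrable_mult_left integrable_real_indicator)
       (auto simp: less_top[symmetric])
  moreover have "(\<integral>y. indicator A y * c \<partial>vec_law d \<nu>) = measure (vec_law d \<nu>) A * c"
    using Am by simp
  moreover have "measure (vec_law d \<nu>) A * c \<ge> 1/2 * c" using mA by (intro mult_right_mono) (auto simp: c_def)
  ultimately show ?thesis unfolding c_def by linarith
qed

context
  fixes M :: "'a measure" and X :: "nat \<Rightarrow> 'a \<Rightarrow> (nat \<Rightarrow> real)"
  assumes M_prob: "prob_space M"
    and indep: "prob_space.indep_vars M (\<lambda>_. vec_law d \<nu>) X UNIV"
    and distrX: "\<forall>i. distr M (vec_law d \<nu>) (X i) = vec_law d \<nu>"
begin

lemma X_meas: "X i \<in> M \<rightarrow>\<^sub>M vec_law d \<nu>"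
  using indep unfolding prob_space.indep_vars_def2[OF M_prob] by auto

lemma hoeff:
  fixes h :: "(nat \<Rightarrow> real) \<Rightarrow> real"
  assumes hm: "h \<in> borel_measurable (vec_law d \<nu>)" and hb: "\<And>y. 0 \<le> h y" "\<And>y. h y \<le> 1"
    and n: "n \<ge> 1" and eps: "\<epsilon> \<ge> 0"
  shows "measure M {\<omega>\<in>space M. \<epsilon> \<le> \<bar>(\<Sum>j\<in>{1..n}. h (X j \<omega>)) / real n - (\<integral>y. h y \<partial>vec_law d \<nu>)\<bar>}
          \<le> 2 * exp (-2 * real n * \<epsilon>^2)"
proof -
  interpret prob_space M by (rule M_prob)
  have Xm[measurable]: "X i \<in> M \<rightarrow>\<^sub>M vec_law d \<nu>" for i by (rule X_meas)
  note hm[measurable]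
  have ind: "indep_vars (\<lambda>_. borel) (\<lambda>j \<omega>. h (X j \<omega>)) {1..n}"
    by (rule indep_vars_compose2[OF indep_vars_subset[OF indep]]) auto
  have dist: "distr M borel (\<lambda>\<omega>. h (X i \<omega>)) = distr (vec_law d \<nu>) borel h" for i
  proof -
    have "distr (distr M (vec_law d \<nu>) (X i)) borel h = distr M borel (h \<circ> X i)"
      by (rule distr_distr) auto
    then show ?thesis using distrX by (simp add: o_def)
  qed
  have HI: "Hoeffding_ineq_iid M {1..n} (\<lambda>j \<omega>. h (X j \<omega>)) (\<lambda>\<omega>. h (X 1 \<omega>)) 0 1"
    unfolding Hoeffding_ineq_iid_def
  proof unfold_locales
    show "indep_vars (\<lambda>_. borel) (\<lambda>j \<omega>. h (X j \<omega>)) {1..n}" by (rule ind)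
    show "distr M borel (\<lambda>\<omega>. h (X i \<omega>)) = distr M borel (\<lambda>\<omega>. h (X 1 \<omega>))" for i
      using dist by simp
    show "AE x in M. h (X 1 x) \<in> {0..1}" using hb by auto
  qed auto
  have E: "expectation (\<lambda>\<omega>. h (X 1 \<omega>)) = (\<integral>y. h y \<partial>vec_law d \<nu>)"
    using integral_distr[OF Xm hm, of 1] distrX by simp
  have "prob {\<omega>\<in>space M. \<epsilon> \<le> \<bar>(\<Sum>j\<in>{1..n}. h (X j \<omega>)) / real (card {1..n}) - expectation (\<lambda>\<omega>. h (X 1 \<omega>))\<bar>}
        \<le> 2 * exp (- 2 * real (card {1..n}) * \<epsilon>\<^sup>2 / (1 - 0)\<^sup>2)"
    using Hoeffding_ineq_iid.Hoeffding_ineq_abs_ge'[OF HI eps] n by simp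
  then show ?thesis using E by simp
qed

lemma tailX: "measure M {\<omega>\<in>space M. a \<le> vnorm d (X i \<omega>)}
    = measure (vec_law d \<nu>) {y\<in>space (vec_law d \<nu>). a \<le> vnorm d y}"
proof -
  have [measurable]: "(\<lambda>y. vnorm d y) \<in> borel_measurable (vec_law d \<nu>)" by (rule vnorm_meas)
  have S: "{y\<in>space (vec_law d \<nu>). a \<le> vnorm d y} \<in> sets (vec_law d \<nu>)" by measurable
  have "measure (distr M (vec_law d \<nu>) (X i)) {y\<in>space (vec_law d \<nu>). a \<le> vnorm d y}
      = measure M (X i -` {y\<in>space (vec_law d \<nu>). a \<le> vnorm d y} \<inter> space M)"
    by (rule measure_distr[OF X_meas S])
  also have "X i -` {y\<in>space (vec_law d \<nu>). a \<le> vnorm d y} \<inter> space M = {\<omega>\<in>space M. a \<le> vnorm d (X i \<omega>)}"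
    using measurable_space[OF X_meas] by auto
  finally show ?thesis using distrX by simp
qed

lemma Ev_meas: assumes "h \<in> borel_measurable (vec_law d \<nu>)"
  shows "Ev M X n (vec_law d \<nu>) h t \<in> sets M"
proof -
  have [measurable]: "X i \<in> M \<rightarrow>\<^sub>M vec_law d \<nu>" for i by (rule X_meas)
  note assms[measurable]
  show ?thesis unfolding Ev_def by measurable
qed

lemma U1_meas: "{\<omega>\<in>space M. a \<le> vnorm d (X i \<omega>)} \<in> sets M"
proof -
  have [measurable]: "X i \<in> M \<rightarrow>\<^sub>M vec_law d \<nu>" for i by (rule X_meas)
  have [measurable]: "(\<lambda>y. vnorm d y) \<in> borel_measurable (vec_law d \<nu>)" by (rule vnorm_meas)
  show ?thesis by measurable
qed

lemma bad_meas: "Bad M X d \<nu> c1 \<delta> n \<in> sets M"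
  unfolding Bad_def
  by (intro sets.Un sets.finite_UN finite_SigmaI finite_XG finite_SG finite_atLeastAtMost ballI
      U1_meas Ev_meas kf_meas kg_meas)

lemma bad_bound:
  assumes c1: "c1 > 0" and C: "C > 0"
    and tail: "\<forall>t\<ge>0. measure (vec_law d \<nu>) {x \<in> space (vec_law d \<nu>). vnorm d x \<ge> sqrt (real d) + t}
                 \<le> C * exp (- (c1 * t^2))"
    and n: "n \<ge> 1"
  shows "measure M (Bad M X d \<nu> c1 \<delta> n) \<le> (C + 8 * 4^d) / real n ^ 2"
proof -
  interpret prob_space M by (rule M_prob)
  define U1 where "U1 = (\<Union>i\<in>{1..n}. {\<omega>\<in>space M. Rn c1 d n \<le> vnorm d (X i \<omega>)})"
  define E where "E = (\<lambda>p. Ev M X n (vec_law d \<nu>) (kf d (snd p) (fst p)) (tn d n)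
                         \<union> Ev M X n (vec_law d \<nu>) (kg d (snd p) (fst p)) (tn d n))"
  define U2 where "U2 = (\<Union>p\<in>XG d n \<times> SG \<delta> n. E p)"
  have Bad_eq: "Bad M X d \<nu> c1 \<delta> n = U1 \<union> U2" unfolding Bad_def U1_def U2_def E_def by simp
  have fin: "finite (XG d n \<times> SG \<delta> n)" by (intro finite_SigmaI finite_XG finite_SG)
  have Em: "E p \<in> sets M" for p unfolding E_def by (intro sets.Un Ev_meas kf_meas kg_meas)
  define t0 where "t0 = sqrt (3 * ln (real n) / c1)"
  have t0: "t0 \<ge> 0" unfolding t0_def using n c1 by simp
  have each: "measure M {\<omega>\<in>space M. Rn c1 d n \<le> vnorm d (X i \<omega>)} \<le> C / real n ^ 3" for i
  proof -
    have "measure M {\<omega>\<in>space M. Rn c1 d n \<le> vnorm d (X i \<omega>)}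
        = measure (vec_law d \<nu>) {y\<in>space (vec_law d \<nu>). Rn c1 d n \<le> vnorm d y}" by (rule tailX)
    also have "\<dots> \<le> C * exp (- (c1 * t0^2))"
    proof -
      have Rt: "Rn c1 d n = sqrt (real d) + t0" unfolding Rn_def t0_def ..
      show ?thesis unfolding Rt using tail[rule_format, OF t0] by simp
    qed
    also have "c1 * t0^2 = real 3 * ln (real n)" unfolding t0_def by (rule Rt_sq[OF n c1])
    also have "exp (- (real 3 * ln (real n))) = 1 / real n ^ 3" by (rule exp_ln_pow[OF n])
    finally show ?thesis by simp
  qed
  have m1: "measure M U1 \<le> C / real n ^ 2"
  proof -
    have "measure M U1 \<le> (\<Sum>i\<in>{1..n}. measure M {\<omega>\<in>space M. Rn c1 d n \<le> vnorm d (X i \<omega>)})"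
      unfolding U1_def by (intro finite_measure_subadditive_finite) (auto intro: U1_meas)
    also have "\<dots> \<le> (\<Sum>i\<in>{1..n}. C / real n ^ 3)" by (intro sum_mono each)
    also have "\<dots> = C / real n ^ 2" using n by (simp add: power3_eq_cube power2_eq_square)
    finally show ?thesis .
  qed
  have tnn: "tn d n \<ge> 0" unfolding tn_def using n by simp
  have hexp: "exp (-2 * real n * (tn d n)^2) = 1 / real n ^ (2*d+4)"
  proof -
    have "-2 * real n * (tn d n)^2 = - (real (2*d+4) * ln (real n))" using tn_sq[OF n, of d] by simp
    then show ?thesis using exp_ln_pow[OF n, of "2*d+4"] by simp
  qed
  have eachE: "measure M (E p) \<le> 4 * (1 / real n ^ (2*d+4))" for p
  proof -
    have "measure M (E p) \<le> measure M (Ev M X n (vec_law d \<nu>) (kf d (snd p) (fst p)) (tn d n))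
                           + measure M (Ev M X n (vec_law d \<nu>) (kg d (snd p) (fst p)) (tn d n))"
      unfolding E_def by (intro measure_Un_le Ev_meas kf_meas kg_meas)
    also have "\<dots> \<le> 2 * exp (-2 * real n * (tn d n)^2) + 2 * exp (-2 * real n * (tn d n)^2)"
      unfolding Ev_def
      by (intro add_mono hoeff kf_meas kg_meas n tnn) (auto intro: kg_nonneg kg_le1 less_imp_le[OF kf_pos] kf_le1)
    finally show ?thesis unfolding hexp by simp
  qed
  have m2: "measure M U2 \<le> 8 * 4^d / real n ^ 2"
  proof -
    have "measure M U2 \<le> (\<Sum>p\<in>XG d n \<times> SG \<delta> n. measure M (E p))"
      unfolding U2_def using fin Em by (intro finite_measure_subadditive_finite) auto
    also have "\<dots> \<le> (\<Sum>p\<in>XG d n \<times> SG \<delta> n. 4 * (1 / real n ^ (2*d+4)))" by (intro sum_mono eachE)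
    also have "\<dots> = real (card (XG d n \<times> SG \<delta> n)) * 4 * (1 / real n ^ (2*d+4))" by simp
    also have "\<dots> \<le> real ((2*n^2+2)^d * (n^2+1)) * 4 * (1 / real n ^ (2*d+4))"
    proof -
      have "card (XG d n \<times> SG \<delta> n) \<le> (2*n^2+2)^d * (n^2+1)"
        unfolding card_cartesian_product by (intro mult_mono card_XG card_SG) auto
      then have cc: "real (card (XG d n \<times> SG \<delta> n)) \<le> real ((2*n^2+2)^d * (n^2+1))" by (rule of_nat_mono)
      show ?thesis by (intro mult_right_mono cc) auto
    qed
    also have "\<dots> \<le> 8 * 4^d / real n ^ 2" by (rule final_count[OF n])
    finally show ?thesis .
  qed
  have "measure M (Bad M X d \<nu> c1 \<delta> n) \<le> measure M U1 + measure M U2"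
    unfolding Bad_eq using Em fin by (intro measure_Un_le) (auto simp: U1_def U2_def intro: U1_meas)
  also have "\<dots> \<le> C / real n ^ 2 + 8 * 4^d / real n ^ 2" by (intro add_mono m1 m2)
  also have "\<dots> = (C + 8 * 4^d) / real n ^ 2" by (simp add: add_divide_distrib)
  finally show ?thesis .
qed

lemma bad_AE:
  assumes c1: "c1 > 0" and C: "C > 0"
    and tail: "\<forall>t\<ge>0. measure (vec_law d \<nu>) {x \<in> space (vec_law d \<nu>). vnorm d x \<ge> sqrt (real d) + t}
                 \<le> C * exp (- (c1 * t^2))"
  shows "AE \<omega> in M. eventually (\<lambda>n. \<omega> \<in> space M - Bad M X d \<nu> c1 \<delta> n) sequentially"
proof -
  interpret prob_space M by (rule M_prob)
  have s: "summable (\<lambda>n. (C + 8 * 4^d) * inverse (real n ^ 2))"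
    by (intro summable_mult inverse_power_summable) auto
  have "summable (\<lambda>n. measure M (Bad M X d \<nu> c1 \<delta> n))"
  proof (rule summable_comparison_test'[OF s, of 1])
    fix n :: nat assume "1 \<le> n"
    then show "norm (measure M (Bad M X d \<nu> c1 \<delta> n)) \<le> (C + 8 * 4^d) * inverse (real n ^ 2)"
      using bad_bound[OF c1 C tail, of n] by (simp add: divide_inverse)
  qed
  then show ?thesis
    by (intro borel_cantelli_AE1 bad_meas) (auto simp: less_top[symmetric])
qed

lemma sq_sum_le: "((x::real) + y)^2 \<le> 2 * x^2 + 2 * y^2"
proof -
  have "(x + y)^2 + (x - y)^2 = 2 * x^2 + 2 * y^2" by (simp add: power2_eq_square algebra_simps)
  moreover have "(x - y)^2 \<ge> 0" by simp
  ultimately show ?thesis by linarith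
qed

lemma det_bound:
  assumes c1: "c1 > 0" and C: "C > 0" and d0: "\<delta> > 0"
    and tail: "\<forall>t\<ge>0. measure (vec_law d \<nu>) {x \<in> space (vec_law d \<nu>). vnorm d x \<ge> sqrt (real d) + t}
                 \<le> C * exp (- (c1 * t^2))"
  obtains K where "\<And>\<omega> n \<sigma> i. \<omega> \<in> space M \<Longrightarrow> \<omega> \<notin> Bad M X d \<nu> c1 \<delta> n \<Longrightarrow>
      n \<ge> 3 + 2*d + nat \<lceil>12/c1\<rceil> \<Longrightarrow> \<sigma> \<in> {\<delta>..sqrt (real n)} \<Longrightarrow> i \<in> {1..n} \<Longrightarrow>
      \<bar>((1 / real n) * (\<Sum>j=1..n. kg d \<sigma> (X i \<omega>) (X j \<omega>)))
                / ((1 / real n) * (\<Sum>j=1..n. kf d \<sigma> (X i \<omega>) (X j \<omega>)))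
              - (\<integral>x'. kg d \<sigma> (X i \<omega>) x' \<partial>vec_law d \<nu>)
                / (\<integral>x'. kf d \<sigma> (X i \<omega>) x' \<partial>vec_law d \<nu>)\<bar>
             \<le> K * (real n powr (8 / (c1 * \<delta>^2) - 1/2) * sqrt (ln (real n)))"
proof -
  define q where "q = 1 / (c1 * \<delta>^2)"
  have q: "q > 0" unfolding q_def using c1 d0 by simp
  define t0 where "t0 = sqrt (ln (2*C+1) / c1)"
  have t0: "t0 \<ge> 0" unfolding t0_def using C c1 by simp
  define r0 where "r0 = sqrt (real d) + t0"
  have r0: "r0 \<ge> 0" unfolding r0_def using t0 by simp
  have half: "measure (vec_law d \<nu>) {y \<in> space (vec_law d \<nu>). vnorm d y \<ge> r0} \<le> 1/2"
  proof -
    have "measure (vec_law d \<nu>) {y \<in> space (vec_law d \<nu>). vnorm d y \<ge> r0} \<le> C * exp (- (c1 * t0^2))"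
      unfolding r0_def using tail t0 by auto
    also have "c1 * t0^2 = ln (2*C+1)" unfolding t0_def using c1 C by simp
    also have "C * exp (- ln (2*C+1)) = C / (2*C+1)" using C by (simp add: exp_minus divide_inverse)
    also have "\<dots> \<le> 1/2" using C by (simp add: field_simps)
    finally show ?thesis .
  qed
  define D where "D = sqrt (real d) + r0"
  define c0 where "c0 = 1/2 * exp (- (D^2 / \<delta>^2))"
  have c0: "c0 > 0" unfolding c0_def by simp
  define K1 where "K1 = sqrt (real d + 2) + 20/\<delta> * (sqrt (real d) + 1)"
  have K1: "K1 \<ge> 0" unfolding K1_def using d0 by simp
  define a where "a = 4 * real d / \<delta>^2"
  define b where "b = 12 / (c1 * \<delta>^2)"
  have ab: "a \<ge> 0" "b \<ge> 0" unfolding a_def b_def using c1 d0 by auto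
  define K where "K = 4*K1/c0^2 + 2*K1/c0^2 + (a + b/(5*q)) * (2*K1/c0)"
  show ?thesis
  proof (rule that[of K])
    fix \<omega> n \<sigma> i
    assume om: "\<omega> \<in> space M" "\<omega> \<notin> Bad M X d \<nu> c1 \<delta> n"
      and nN: "n \<ge> 3 + 2*d + nat \<lceil>12/c1\<rceil>" and sig: "\<sigma> \<in> {\<delta>..sqrt (real n)}" and i: "i \<in> {1..n}"
    have n1: "n \<ge> 1" using nN by simp
    have nr: "real n \<ge> 3" using nN by simp
    have np: "real n > 0" using nr by simp
    have ln1: "ln (real n) \<ge> 1"
      using nr exp_le by (subst ln_ge_iff) auto
    have s1: "\<delta> \<le> \<sigma>" and s2: "\<sigma> \<le> sqrt (real n)" using sig by auto
    have sp: "\<sigma> > 0" using s1 d0 by simp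
    define x where "x = X i \<omega>"
    define R where "R = Rn c1 d n"
    have normX: "vnorm d (X j \<omega>) < R" if "j \<in> {1..n}" for j
    proof -
      have "\<not> Rn c1 d n \<le> vnorm d (X j \<omega>)" using om that unfolding Bad_def by auto
      then show ?thesis unfolding R_def by simp
    qed
    have xR: "vnorm d x < R" unfolding x_def using normX[OF i] .
    define w where "w = sqrt (3 * ln (real n) / c1)"
    have w0: "w \<ge> 0" unfolding w_def using c1 ln1 by simp
    have Rw: "R = sqrt (real d) + w" unfolding R_def Rn_def w_def ..
    have w2: "w^2 = 3 * ln (real n) / c1" unfolding w_def using c1 ln1 by simp
    have Rn_le: "R \<le> real n"
    proof -
      have "sqrt (real d) \<le> real d"
      proof (cases "d = 0")
        case False
        then have "1 \<le> real d" by simp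
        then have "1 \<le> sqrt (real d)" by simp
        then have "sqrt (real d) * 1 \<le> sqrt (real d) * sqrt (real d)" by (intro mult_left_mono) auto
        then show ?thesis by simp
      qed simp
      moreover have "real d \<le> real n / 2" using nN by simp
      moreover have "w \<le> real n / 2"
      proof -
        have c: "12 / c1 \<le> real n" using nN by linarith
        have "3 * ln (real n) / c1 \<le> 3 * real n / c1"
          using c1 np ln_le_minus_one[of "real n"] by (intro divide_right_mono) auto
        also have "\<dots> = real n * (12 / c1) / 4" by simp
        also have "\<dots> \<le> real n * real n / 4" using c np by (intro divide_right_mono mult_left_mono) auto
        also have "\<dots> = (real n / 2)^2" by (simp add: power2_eq_square)
        finally have "w^2 \<le> (real n / 2)^2" using w2 by simp
        then show ?thesis using np by (simp add: power2_le_iff_abs_le)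
      qed
      ultimately show ?thesis using Rw by linarith
    qed
    have xn: "vnorm d x \<le> real n" using xR Rn_le by simp
    have gridf: "\<bar>(\<Sum>j\<in>{1..n}. kf d \<sigma>' x' (X j \<omega>)) / real n - (\<integral>y. kf d \<sigma>' x' y \<partial>vec_law d \<nu>)\<bar> < tn d n"
      if "x' \<in> XG d n" "\<sigma>' \<in> SG \<delta> n" for x' \<sigma>'
    proof -
      have "\<omega> \<notin> Ev M X n (vec_law d \<nu>) (kf d \<sigma>' x') (tn d n)" using om that unfolding Bad_def by force
      then show ?thesis using om unfolding Ev_def by auto
    qed
    have gridg: "\<bar>(\<Sum>j\<in>{1..n}. kg d \<sigma>' x' (X j \<omega>)) / real n - (\<integral>y. kg d \<sigma>' x' y \<partial>vec_law d \<nu>)\<bar> < tn d n"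
      if "x' \<in> XG d n" "\<sigma>' \<in> SG \<delta> n" for x' \<sigma>'
    proof -
      have "\<omega> \<notin> Ev M X n (vec_law d \<nu>) (kg d \<sigma>' x') (tn d n)" using om that unfolding Bad_def by force
      then show ?thesis using om unfolding Ev_def by auto
    qed
    define e where "e = tn d n + 2 * (10/\<delta>) * (sqrt (real d) / real n + 1 / real n)"
    have L: "10/\<delta> \<ge> 0" using d0 by simp
    have devf: "\<bar>(\<Sum>j\<in>{1..n}. kf d \<sigma> x (X j \<omega>)) / real n - (\<integral>y. kf d \<sigma> x y \<partial>vec_law d \<nu>)\<bar> \<le> e"
      unfolding e_def
      by (rule unif_dev[where K="\<lambda>\<sigma> x y. kf d \<sigma> x y" and P="\<lambda>\<sigma> x. \<integral>y. kf d \<sigma> x y \<partial>vec_law d \<nu>"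
            and Y="\<lambda>j. X j \<omega>", OF kf_lip[OF d0] Fp_lip[OF d0] gridf n1 d0 L xn s1 s2])
        (use d0 in auto)
    have devg: "\<bar>(\<Sum>j\<in>{1..n}. kg d \<sigma> x (X j \<omega>)) / real n - (\<integral>y. kg d \<sigma> x y \<partial>vec_law d \<nu>)\<bar> \<le> e"
      unfolding e_def
      by (rule unif_dev[where K="\<lambda>\<sigma> x y. kg d \<sigma> x y" and P="\<lambda>\<sigma> x. \<integral>y. kg d \<sigma> x y \<partial>vec_law d \<nu>"
            and Y="\<lambda>j. X j \<omega>", OF kg_lip[OF d0] Gp_lip[OF d0] gridg n1 d0 L xn s1 s2])
        (use d0 in auto)
    have ebd: "e \<le> K1 * sqrt (ln (real n)) * real n powr (-1/2)"
    proof -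
      define u where "u = real n powr (-1/2)"
      have u0: "u > 0" unfolding u_def using np by simp
      have usq: "u * u = 1 / real n" unfolding u_def using np
        by (simp add: powr_add[symmetric] powr_minus_divide)
      have u1: "u \<le> 1" unfolding u_def using nr by (simp add: powr_minus_divide ge_one_powr_ge_zero)
      have sl: "1 \<le> sqrt (ln (real n))" using ln1 by simp
      have tneq: "tn d n = sqrt (real d + 2) * sqrt (ln (real n)) * u"
      proof -
        have "tn d n = sqrt (real d + 2) * sqrt (ln (real n)) * sqrt (1 / real n)"
          unfolding tn_def by (simp add: real_sqrt_mult[symmetric] divide_inverse)
        also have "sqrt (1 / real n) = u" unfolding u_def using np
          by (simp add: powr_minus_divide powr_half_sqrt[symmetric] powr_divide)
        finally show ?thesis .
      qed
      have inv: "1 / real n \<le> sqrt (ln (real n)) * u"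
      proof -
        have "1 / real n = u * u" by (simp add: usq)
        also have "\<dots> \<le> 1 * u" using u0 u1 by (intro mult_right_mono) auto
        also have "\<dots> \<le> sqrt (ln (real n)) * u" using sl u0 by (intro mult_right_mono) auto
        finally show ?thesis .
      qed
      have "e \<le> sqrt (real d + 2) * sqrt (ln (real n)) * u + 2 * (10/\<delta>) * ((sqrt (real d) + 1) * (sqrt (ln (real n)) * u))"
      proof -
        have h1: "sqrt (real d) / real n + 1 / real n = (sqrt (real d) + 1) * (1 / real n)"
          by (simp add: add_divide_distrib)
        have "(sqrt (real d) + 1) * (1 / real n) \<le> (sqrt (real d) + 1) * (sqrt (ln (real n)) * u)"
          using inv by (intro mult_left_mono) auto
        then have "2 * (10/\<delta>) * ((sqrt (real d) + 1) * (1 / real n)) \<le> 2 * (10/\<delta>) * ((sqrt (real d) + 1) * (sqrt (ln (real n)) * u))"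
          by (rule mult_left_mono) (use L in auto)
        then show ?thesis unfolding e_def h1 tneq by linarith
      qed
      also have "\<dots> = K1 * sqrt (ln (real n)) * u" unfolding K1_def by (simp add: algebra_simps, simp only: add_divide_distrib)
      finally show ?thesis unfolding u_def .
    qed
    have Flow: "(\<integral>y. kf d \<sigma> x y \<partial>vec_law d \<nu>) \<ge> c0 * real n powr (-3*q)"
    proof -
      have "(\<integral>y. kf d \<sigma> x y \<partial>vec_law d \<nu>) \<ge> 1/2 * exp (- ((vnorm d x + r0)^2 / (2*\<delta>^2)))"
        by (rule Fp_lower[OF d0 s1 r0 half])
      moreover have "exp (- ((vnorm d x + r0)^2 / (2*\<delta>^2))) \<ge> exp (- (D^2/\<delta>^2)) * real n powr (-3*q)"
      proof -
        have vx: "0 \<le> vnorm d x" by (auto simp: vnorm_def intro!: sum_nonneg)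
        have "vnorm d x + r0 \<le> w + D" using xR Rw unfolding D_def by simp
        then have "(vnorm d x + r0)^2 \<le> (w + D)^2" using vx r0 by (intro power_mono) auto
        also have "\<dots> \<le> 2 * w^2 + 2 * D^2" by (rule sq_sum_le)
        finally have "(vnorm d x + r0)^2 / (2*\<delta>^2) \<le> (2 * w^2 + 2 * D^2) / (2*\<delta>^2)"
          using d0 by (intro divide_right_mono) auto
        also have "\<dots> = 3 * q * ln (real n) + D^2/\<delta>^2" unfolding w2 q_def using c1 d0 by (simp add: field_simps)
        finally have ex: "exp (- (3 * q * ln (real n) + D^2/\<delta>^2)) \<le> exp (- ((vnorm d x + r0)^2 / (2*\<delta>^2)))" by simp
        have eq: "exp (- (3 * q * ln (real n) + D^2/\<delta>^2)) = exp (- (D^2/\<delta>^2)) * real n powr (-3*q)"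
          using np by (simp add: powr_def exp_add[symmetric])
        show ?thesis using ex unfolding eq .
      qed
      ultimately show ?thesis unfolding c0_def by simp
    qed
    define S where "S = 2 * R^2 / \<delta>^2"
    have Sj: "sqdist d x (X j \<omega>) / (2 * \<sigma>^2) \<le> S" if "j \<in> {1..n}" for j
    proof -
      have vx: "0 \<le> vnorm d x" "0 \<le> vnorm d (X j \<omega>)" by (auto simp: vnorm_def intro!: sum_nonneg)
      have "sqdist d x (X j \<omega>) = (sqrt (sqdist d x (X j \<omega>)))^2" using sqdist_nonneg by simp
      also have "\<dots> \<le> (vnorm d x + vnorm d (X j \<omega>))^2"
        using rho_le_norm vx sqdist_nonneg by (intro power_mono) auto
      also have "\<dots> \<le> (2 * R)^2" using xR normX[OF that] vx by (intro power_mono) auto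
      finally have a1: "sqdist d x (X j \<omega>) \<le> 4 * R^2" by (simp add: power_mult_distrib)
      have "sqdist d x (X j \<omega>) / (2 * \<sigma>^2) \<le> 4 * R^2 / (2 * \<sigma>^2)"
        using a1 sp by (intro divide_right_mono) auto
      also have "\<dots> \<le> 4 * R^2 / (2 * \<delta>^2)" using s1 d0 by (intro divide_left_mono mult_left_mono power_mono) auto
      also have "\<dots> = S" unfolding S_def by simp
      finally show ?thesis .
    qed
    have Sbd: "S \<le> a + b * ln (real n)"
    proof -
      have "R^2 \<le> 2 * (sqrt (real d))^2 + 2 * w^2" unfolding Rw by (rule sq_sum_le)
      then have "R^2 \<le> 2 * real d + 2 * w^2" by simp
      then have "S \<le> 2 * (2 * real d + 2 * w^2) / \<delta>^2" unfolding S_def using d0 by (intro divide_right_mono) auto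
      also have "\<dots> = a + b * ln (real n)" unfolding a_def b_def w2 using c1 d0 by (simp add: field_simps)
      finally show ?thesis .
    qed
    define Fn where "Fn = (1 / real n) * (\<Sum>j=1..n. kf d \<sigma> x (X j \<omega>))"
    define Gn where "Gn = (1 / real n) * (\<Sum>j=1..n. kg d \<sigma> x (X j \<omega>))"
    have Fnpos: "Fn > 0" unfolding Fn_def using np n1 by (intro mult_pos_pos sum_pos kf_pos) auto
    have Gn0: "Gn \<ge> 0" unfolding Gn_def using np by (intro mult_nonneg_nonneg sum_nonneg kg_nonneg) auto
    have GnS: "Gn \<le> S * Fn"
    proof -
      have "(\<Sum>j=1..n. kg d \<sigma> x (X j \<omega>)) \<le> (\<Sum>j=1..n. S * kf d \<sigma> x (X j \<omega>))"
        by (intro sum_mono kg_le_kf Sj) auto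
      then have "(1 / real n) * (\<Sum>j=1..n. kg d \<sigma> x (X j \<omega>)) \<le> (1 / real n) * (\<Sum>j=1..n. S * kf d \<sigma> x (X j \<omega>))"
        by (rule mult_left_mono) (use np in simp)
      also have "(1 / real n) * (\<Sum>j=1..n. S * kf d \<sigma> x (X j \<omega>)) = S * ((1 / real n) * (\<Sum>j=1..n. kf d \<sigma> x (X j \<omega>)))"
        by (metis sum_distrib_left mult.left_commute)
      finally show ?thesis unfolding Gn_def Fn_def .
    qed
    have dF: "\<bar>Fn - (\<integral>y. kf d \<sigma> x y \<partial>vec_law d \<nu>)\<bar> \<le> e" using devf unfolding Fn_def by simp
    have dG: "\<bar>Gn - (\<integral>y. kg d \<sigma> x y \<partial>vec_law d \<nu>)\<bar> \<le> e" using devg unfolding Gn_def by simp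
    have "\<bar>Gn / Fn - (\<integral>y. kg d \<sigma> x y \<partial>vec_law d \<nu>) / (\<integral>y. kf d \<sigma> x y \<partial>vec_law d \<nu>)\<bar>
        \<le> K * (real n powr (8*q - 1/2) * sqrt (ln (real n)))"
      unfolding K_def
      by (rule ratio_bound[OF Fnpos Gn0 GnS Fp_bounds(2) Gp_bounds(1) Gp_bounds(2) dF dG c0 Flow K1 ebd ab Sbd _ q])
        (use nr in simp)
    moreover have "8*q = 8 / (c1 * \<delta>^2)" unfolding q_def by simp
    ultimately show "\<bar>((1 / real n) * (\<Sum>j=1..n. kg d \<sigma> (X i \<omega>) (X j \<omega>)))
                / ((1 / real n) * (\<Sum>j=1..n. kf d \<sigma> (X i \<omega>) (X j \<omega>)))
              - (\<integral>x'. kg d \<sigma> (X i \<omega>) x' \<partial>vec_law d \<nu>)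
                / (\<integral>x'. kf d \<sigma> (X i \<omega>) x' \<partial>vec_law d \<nu>)\<bar>
             \<le> K * (real n powr (8 / (c1 * \<delta>^2) - 1/2) * sqrt (ln (real n)))"
      unfolding Fn_def Gn_def x_def by simp
  qed
qed

end

end

theorem lemma3p6:
  fixes \<nu> :: "real measure" and M :: "'a measure" and X :: "nat \<Rightarrow> 'a \<Rightarrow> (nat \<Rightarrow> real)"
    and d :: nat and c\<^sub>1 C \<delta> :: real
  assumes "prob_space \<nu>" and "sets \<nu> = sets borel" and "subgaussian \<nu>"
    and "c\<^sub>1 > 0" and "C > 0"
    and "\<forall>t\<ge>0. measure (vec_law d \<nu>) {x \<in> space (vec_law d \<nu>). vnorm d x \<ge> sqrt (real d) + t}
                 \<le> C * exp (- (c\<^sub>1 * t^2))"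
    and "prob_space M"
    and "prob_space.indep_vars M (\<lambda>_. vec_law d \<nu>) X UNIV"
    and "\<forall>i. distr M (vec_law d \<nu>) (X i) = vec_law d \<nu>"
    and "\<delta> > 0"
  shows "AE \<omega> in M. \<exists>K. eventually (\<lambda>n.
           \<forall>\<sigma>\<in>{\<delta>..sqrt (real n)}. \<forall>i\<in>{1..n}.
             \<bar>((1 / real n) * (\<Sum>j=1..n. kg d \<sigma> (X i \<omega>) (X j \<omega>)))
                / ((1 / real n) * (\<Sum>j=1..n. kf d \<sigma> (X i \<omega>) (X j \<omega>)))
              - (\<integral>x'. kg d \<sigma> (X i \<omega>) x' \<partial>vec_law d \<nu>)
                / (\<integral>x'. kf d \<sigma> (X i \<omega>) x' \<partial>vec_law d \<nu>)\<bar>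
             \<le> K * (real n powr (8 / (c\<^sub>1 * \<delta>^2) - 1/2) * sqrt (ln (real n)))) sequentially"
proof -
  define N0 where "N0 = 3 + 2*d + nat \<lceil>12/c\<^sub>1\<rceil>"
  obtain K where K: "\<And>\<omega> n \<sigma> i. \<omega> \<in> space M \<Longrightarrow> \<omega> \<notin> Bad M X d \<nu> c\<^sub>1 \<delta> n \<Longrightarrow>
      n \<ge> 3 + 2*d + nat \<lceil>12/c\<^sub>1\<rceil> \<Longrightarrow> \<sigma> \<in> {\<delta>..sqrt (real n)} \<Longrightarrow> i \<in> {1..n} \<Longrightarrow>
      \<bar>((1 / real n) * (\<Sum>j=1..n. kg d \<sigma> (X i \<omega>) (X j \<omega>)))
                / ((1 / real n) * (\<Sum>j=1..n. kf d \<sigma> (X i \<omega>) (X j \<omega>)))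
              - (\<integral>x'. kg d \<sigma> (X i \<omega>) x' \<partial>vec_law d \<nu>)
                / (\<integral>x'. kf d \<sigma> (X i \<omega>) x' \<partial>vec_law d \<nu>)\<bar>
             \<le> K * (real n powr (8 / (c\<^sub>1 * \<delta>^2) - 1/2) * sqrt (ln (real n)))"
    using det_bound[OF assms(1,2,7,8,9,4,5,10,6)] by blast
  have AE: "AE \<omega> in M. eventually (\<lambda>n. \<omega> \<in> space M - Bad M X d \<nu> c\<^sub>1 \<delta> n) sequentially"
    by (rule bad_AE[OF assms(1,2,7,8,9,4,5,6)])
  show ?thesis
  proof (rule eventually_mono[OF AE])
    fix \<omega> assume ev: "eventually (\<lambda>n. \<omega> \<in> space M - Bad M X d \<nu> c\<^sub>1 \<delta> n) sequentially"
    have ev2: "eventually (\<lambda>n. n \<ge> N0) sequentially" by (rule eventually_ge_at_top)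
    have "eventually (\<lambda>n.
           \<forall>\<sigma>\<in>{\<delta>..sqrt (real n)}. \<forall>i\<in>{1..n}.
             \<bar>((1 / real n) * (\<Sum>j=1..n. kg d \<sigma> (X i \<omega>) (X j \<omega>)))
                / ((1 / real n) * (\<Sum>j=1..n. kf d \<sigma> (X i \<omega>) (X j \<omega>)))
              - (\<integral>x'. kg d \<sigma> (X i \<omega>) x' \<partial>vec_law d \<nu>)
                / (\<integral>x'. kf d \<sigma> (X i \<omega>) x' \<partial>vec_law d \<nu>)\<bar>
             \<le> K * (real n powr (8 / (c\<^sub>1 * \<delta>^2) - 1/2) * sqrt (ln (real n)))) sequentially"
      using eventually_conj[OF ev ev2]
    proof (rule eventually_mono)
      fix n assume "\<omega> \<in> space M - Bad M X d \<nu> c\<^sub>1 \<delta> n \<and> N0 \<le> n"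
      then show "\<forall>\<sigma>\<in>{\<delta>..sqrt (real n)}. \<forall>i\<in>{1..n}.
             \<bar>((1 / real n) * (\<Sum>j=1..n. kg d \<sigma> (X i \<omega>) (X j \<omega>)))
                / ((1 / real n) * (\<Sum>j=1..n. kf d \<sigma> (X i \<omega>) (X j \<omega>)))
              - (\<integral>x'. kg d \<sigma> (X i \<omega>) x' \<partial>vec_law d \<nu>)
                / (\<integral>x'. kf d \<sigma> (X i \<omega>) x' \<partial>vec_law d \<nu>)\<bar>
             \<le> K * (real n powr (8 / (c\<^sub>1 * \<delta>^2) - 1/2) * sqrt (ln (real n)))"
        using K unfolding N0_def by blast
    qed
    then show "\<exists>K. eventually (\<lambda>n.
           \<forall>\<sigma>\<in>{\<delta>..sqrt (real n)}. \<forall>i\<in>{1..n}.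
             \<bar>((1 / real n) * (\<Sum>j=1..n. kg d \<sigma> (X i \<omega>) (X j \<omega>)))
                / ((1 / real n) * (\<Sum>j=1..n. kf d \<sigma> (X i \<omega>) (X j \<omega>)))
              - (\<integral>x'. kg d \<sigma> (X i \<omega>) x' \<partial>vec_law d \<nu>)
                / (\<integral>x'. kf d \<sigma> (X i \<omega>) x' \<partial>vec_law d \<nu>)\<bar>
             \<le> K * (real n powr (8 / (c\<^sub>1 * \<delta>^2) - 1/2) * sqrt (ln (real n)))) sequentially"
      by blast
  qed
qed

end
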